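(* Let $(q_{i,j})_{i,j\in\mathbb Z^{\geq 0}}$ be the infinite array of non-negative integers defined greedily (row by row, and within each row by increasing $j$) by $$q_{i,j}=\operatorname{mex}\Big(\{q_{i,k}+q_{l,j}-q_{l,k}\mid 0\leq l<i,\ 0\leq k<j\}\cap\mathbb Z^{\geq 0}\Big),$$ and let $q_j=q_{2,j}$. Then the sequence $(q_j)_{j\in\mathbb Z^{\geq 0}}$ is a permutation of $\mathbb Z^{\geq 0}$, and every integer appears exactly once in the sequence $(q_j-j)_{j\in\mathbb Z^{\geq 0}}$.
   Context: $\mathbb Z^{\geq 0}=\{0,1,2,\dots\}$. For $X\subseteq\mathbb Z^{\ge0}$, $\operatorname{mex}(X)=\min(\mathbb Z^{\geq 0}\setminus X)$, with $\operatorname{mex}(\emptyset)=0$. (Row $0$ of the array is identically $0$ and row $1$ is $q_{1,j}=j$.) *)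

theory Defs
  imports Main
begin

definition mex :: "nat set \<Rightarrow> nat" where
  "mex X = (LEAST n. n \<notin> X)"

function qarr :: "nat \<Rightarrow> nat \<Rightarrow> nat" where
  "qarr i j = mex (nat ` ({x. 0 \<le> x} \<inter>
      (\<Union>l\<in>{..<i}. (\<lambda>k. int (qarr i k) + int (qarr l j) - int (qarr l k)) ` {..<j})))"
  by pat_completeness auto
termination
  by (relation "measure (\<lambda>(i,j). i + j)") auto

end

theory Submission
  imports Defs
begin

declare qarr.simps[simp del]

lemma mex_eqI: assumes "m \<notin> X" "\<And>v. v < m \<Longrightarrow> v \<in> X" shows "mex X = m"
  unfolding mex_def
proof (rule Least_equality)
  show "m \<notin> X" by fact
  fix y assume y: "y \<notin> X"
  show "m \<le> y"
  proof (rule ccontr)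
    assume "\<not> m \<le> y"
    then have "y < m" by simp
    then show False using assms(2) y by blast
  qed
qed

lemma mex_notin: assumes "finite X" shows "mex X \<notin> X"
proof -
  obtain n :: nat where "n \<notin> X" using ex_new_if_finite[OF infinite_UNIV_nat assms] by blast
  then show ?thesis unfolding mex_def by (rule LeastI)
qed

lemma mex_empty: "mex {} = 0" by (rule mex_eqI) auto

lemma q0: "qarr 0 j = 0"
proof -
  have "qarr 0 j = mex (nat ` ({x. 0 \<le> x} \<inter>
      (\<Union>l\<in>{..<0}. (\<lambda>k. int (qarr 0 k) + int (qarr l j) - int (qarr l k)) ` {..<j})))"
    by (rule qarr.simps)
  then show ?thesis by (simp add: mex_empty)
qed

lemma q1: "qarr 1 j = j"
proof (induction j rule: less_induct)
  case (less j)
  have "qarr 1 j = mex (nat ` ({x. 0 \<le> x} \<inter>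
      (\<Union>l\<in>{..<1}. (\<lambda>k. int (qarr 1 k) + int (qarr l j) - int (qarr l k)) ` {..<j})))"
    by (rule qarr.simps)
  also have "(\<Union>l\<in>{..<1::nat}. (\<lambda>k. int (qarr 1 k) + int (qarr l j) - int (qarr l k)) ` {..<j})
     = int ` {..<j}" using less by (auto simp: q0)
  also have "{x. 0 \<le> x} \<inter> int ` {..<j} = int ` {..<j}" by auto
  also have "nat ` int ` {..<j} = {..<j}" by (simp add: image_image)
  also have "mex {..<j} = j" by (rule mex_eqI) auto
  finally show ?case .
qed

definition qq :: "nat \<Rightarrow> nat" where "qq j = qarr 2 j"

lemma qrec: "qq j = mex (qq ` {..<j} \<union> (\<lambda>k. qq k + j - k) ` {..<j})"
proof -
  have "qq j = mex (nat ` ({x. 0 \<le> x} \<inter>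
      (\<Union>l\<in>{..<2}. (\<lambda>k. int (qarr 2 k) + int (qarr l j) - int (qarr l k)) ` {..<j})))"
    unfolding qq_def by (rule qarr.simps)
  also have "(\<Union>l\<in>{..<2::nat}. (\<lambda>k. int (qarr 2 k) + int (qarr l j) - int (qarr l k)) ` {..<j})
     = int ` (qq ` {..<j} \<union> (\<lambda>k. qq k + j - k) ` {..<j})"
  proof -
    have e: "{..<2::nat} = {0,1}" by auto
    have q1': "qarr (Suc 0) i = i" for i using q1 by simp
    have i2: "int ` ((\<lambda>k. qq k + j - k) ` {..<j}) = (\<lambda>k. int (qq k) + int j - int k) ` {..<j}"
      unfolding image_image by (rule image_cong) (auto simp: of_nat_diff)
    show ?thesis unfolding e image_Un i2 by (simp add: q0 q1' image_image qq_def[symmetric])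
  qed
  also have "{x. 0 \<le> x} \<inter> int ` (qq ` {..<j} \<union> (\<lambda>k. qq k + j - k) ` {..<j})
     = int ` (qq ` {..<j} \<union> (\<lambda>k. qq k + j - k) ` {..<j})" by auto
  also have "nat ` int ` S = S" for S by (simp add: image_image)
  finally show ?thesis .
qed


definition Inv :: "nat \<Rightarrow> nat \<Rightarrow> nat \<Rightarrow> bool" where
  "Inv n a b \<longleftrightarrow> n = a + b \<and> (\<lambda>k. int (qq k) - int k) ` {..n} = {- int a..int b}
      \<and> {..<b} \<subseteq> qq ` {..n}"

lemma Inv_bound: assumes "Inv n a b" "k \<le> n" shows "qq k \<le> a + 2*b"
proof -
  note IA = assms(1)[unfolded Inv_def]
  have n: "n = a + b" by (rule conjunct1[OF IA])
  have D: "(\<lambda>k. int (qq k) - int k) ` {..n} = {- int a..int b}" by (rule conjunct1[OF conjunct2[OF IA]])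
  have "int (qq k) - int k \<in> {- int a..int b}" using assms(2) unfolding D[symmetric] by blast
  then have "int (qq k) - int k \<le> int b" by simp
  then show ?thesis using n assms(2) by linarith
qed

lemma Inv0: "Inv 0 0 0"
proof -
  have m: "mex {} = 0" by (rule mex_eqI) auto
  have q: "qq 0 = 0" using qrec[of 0] m by simp
  have "(\<lambda>k. int (qq k) - int k) ` {..0} = {0}" using q by simp
  then show ?thesis unfolding Inv_def by simp
qed

lemma step: assumes I: "Inv n a b"
  shows "(b \<notin> qq ` {..n} \<and> qq (Suc n) = b \<and> Inv (Suc n) (Suc a) b) \<or>
         (b \<in> qq ` {..n} \<and> qq (Suc n) = a + 2*b + 2 \<and> Inv (Suc n) a (Suc b))"
proof -
  note IA = I[unfolded Inv_def]
  have n: "n = a + b" by (rule conjunct1[OF IA])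
  have D: "(\<lambda>k. int (qq k) - int k) ` {..n} = {- int a..int b}" by (rule conjunct1[OF conjunct2[OF IA]])
  have L: "{..<b} \<subseteq> qq ` {..n}" by (rule conjunct2[OF conjunct2[OF IA]])
  have S2: "(\<lambda>k. qq k + Suc n - k) ` {..n} = {b+1..a+2*b+1}"
  proof
    show "(\<lambda>k. qq k + Suc n - k) ` {..n} \<subseteq> {b+1..a+2*b+1}"
    proof
      fix v assume "v \<in> (\<lambda>k. qq k + Suc n - k) ` {..n}"
      then obtain k where k: "k \<le> n" "v = qq k + Suc n - k" by auto
      have "int (qq k) - int k \<in> (\<lambda>k. int (qq k) - int k) ` {..n}" using k by simp
      then have "int (qq k) - int k \<in> {- int a..int b}" by (simp only: D)
      then have h: "- int a \<le> int (qq k) - int k" "int (qq k) - int k \<le> int b" by auto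
      have "int v = int (qq k) + int (Suc n) - int k" using k by (simp add: of_nat_diff)
      then show "v \<in> {b+1..a+2*b+1}" unfolding atLeastAtMost_iff using h n by linarith
    qed
  next
    show "{b+1..a+2*b+1} \<subseteq> (\<lambda>k. qq k + Suc n - k) ` {..n}"
    proof
      fix v assume v: "v \<in> {b+1..a+2*b+1}"
      then have "- int a \<le> int v - int (Suc n) \<and> int v - int (Suc n) \<le> int b"
        using n by simp
      then have "int v - int (Suc n) \<in> (\<lambda>k. int (qq k) - int k) ` {..n}"
        unfolding D by simp
      then obtain k where k0: "int v - int (Suc n) = int (qq k) - int k" "k \<in> {..n}"
        by (rule imageE)
      then have k: "k \<le> n" "int (qq k) - int k = int v - int (Suc n)" by simp_all
      have kk: "k \<le> qq k + Suc n" using k(1) by simp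
      have "int (qq k + Suc n - k) = int (qq k) + int (Suc n) - int k"
        using kk by (simp only: of_nat_diff of_nat_add)
      then have "int v = int (qq k + Suc n - k)" using k(2) by linarith
      then have ve: "v = qq k + Suc n - k" by (simp only: of_nat_eq_iff)
      show "v \<in> (\<lambda>k. qq k + Suc n - k) ` {..n}"
        by (rule image_eqI[where x=k]) (use ve k(1) in simp_all)
    qed
  qed
  have Q: "qq (Suc n) = mex (qq ` {..n} \<union> {b+1..a+2*b+1})"
    using qrec[of "Suc n"] unfolding lessThan_Suc_atMost S2 .
  have B: "\<And>k. k \<le> n \<Longrightarrow> qq k \<le> a + 2*b" using Inv_bound[OF I] .
  have DS: "(\<lambda>k. int (qq k) - int k) ` {..Suc n} =
      insert (int (qq (Suc n)) - int (Suc n)) {- int a..int b}"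
    using D by (simp add: atMost_Suc)
  show ?thesis
  proof (cases "b \<in> qq ` {..n}")
    case False
    have q: "qq (Suc n) = b" unfolding Q
      by (rule mex_eqI) (use False L in auto)
    have "insert (int b - int (Suc n)) {- int a..int b} = {- int (Suc a)..int b}"
      using n by auto
    then have D2: "(\<lambda>k. int (qq k) - int k) ` {..Suc n} = {- int (Suc a)..int b}"
      using DS q by simp
    have L2: "{..<b} \<subseteq> qq ` {..Suc n}" using L by (auto simp: atMost_Suc)
    have "Inv (Suc n) (Suc a) b" unfolding Inv_def using n D2 L2 by simp
    then show ?thesis using False q by blast
  next
    case True
    have q: "qq (Suc n) = a + 2*b + 2" unfolding Q
    proof (rule mex_eqI)
      have "a + 2 * b + 2 \<notin> qq ` {..n}"
      proof
        assume "a + 2 * b + 2 \<in> qq ` {..n}"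
        then obtain k where "k \<le> n" "qq k = a + 2 * b + 2" by auto
        then show False using B[of k] by simp
      qed
      then show "a + 2 * b + 2 \<notin> qq ` {..n} \<union> {b + 1..a + 2 * b + 1}" by simp
      fix v assume v: "v < a + 2*b + 2"
      consider "v < b" | "v = b" | "b < v" by linarith
      then show "v \<in> qq ` {..n} \<union> {b + 1..a + 2 * b + 1}"
      proof cases
        case 1 then show ?thesis using L by auto
      next
        case 2 then show ?thesis using True by auto
      next
        case 3 then show ?thesis using v by auto
      qed
    qed
    have "insert (int (a + 2*b+2) - int (Suc n)) {- int a..int b} = {- int a..int (Suc b)}"
      using n by auto
    moreover have "{..<Suc b} \<subseteq> qq ` {..Suc n}" using L True
      by (auto simp: lessThan_Suc atMost_Suc)
    ultimately have "Inv (Suc n) a (Suc b)" unfolding Inv_def using n DS q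
      by simp
    then show ?thesis using True q by blast
  qed
qed

primrec st :: "nat \<Rightarrow> nat \<times> nat" where
  "st 0 = (0,0)"
| "st (Suc n) = (if qq (Suc n) = snd (st n) then (Suc (fst (st n)), snd (st n))
                 else (fst (st n), Suc (snd (st n))))"

lemma Inv_st: "Inv n (fst (st n)) (snd (st n))"
proof (induction n)
  case 0 then show ?case using Inv0 by simp
next
  case (Suc n)
  from step[OF this] show ?case by auto
qed

lemma st_mono: "fst (st n) \<le> fst (st (Suc n))" "snd (st n) \<le> snd (st (Suc n))"
  by auto

lemma b_step2: "Suc (snd (st n)) \<le> snd (st (Suc (Suc n)))"
proof (cases "qq (Suc n) = snd (st n)")
  case False
  then show ?thesis using st_mono(2)[of "Suc n"] by simp
next
  case True
  then have s: "st (Suc n) = (Suc (fst (st n)), snd (st n))" by simp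
  have I: "Inv (Suc n) (Suc (fst (st n))) (snd (st n))" using Inv_st[of "Suc n"] s by simp
  have "snd (st n) \<in> qq ` {..Suc n}" using True by force
  with step[OF I] have "qq (Suc (Suc n)) \<noteq> snd (st n)" by auto
  then show ?thesis using s by simp
qed

lemma b_unb: "k \<le> snd (st (2*k))"
proof (induction k)
  case 0 then show ?case by simp
next
  case (Suc k)
  have "Suc (2*k) = 2*k + 1" by simp
  have "2 * Suc k = Suc (Suc (2*k))" by simp
  then show ?case using b_step2[of "2*k"] Suc by simp
qed

lemma fst_mono: "m \<le> m' \<Longrightarrow> fst (st m) \<le> fst (st m')"
  by (rule lift_Suc_mono_le[of "\<lambda>n. fst (st n)"]) (use st_mono in auto)

lemma a_grows: "\<exists>m\<ge>n. fst (st n) < fst (st m)"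
proof (rule ccontr)
  assume "\<not> ?thesis"
  then have C: "\<And>m. m \<ge> n \<Longrightarrow> fst (st m) = fst (st n)"
    using fst_mono by (meson antisym not_less)
  define a0 where "a0 = fst (st n)"
  define b0 where "b0 = snd (st n)"
  have bs: "\<And>m. m \<ge> n \<Longrightarrow> qq (Suc m) \<noteq> snd (st m)"
  proof -
    fix m assume "m \<ge> n"
    then have "fst (st (Suc m)) = fst (st m)" using C[of m] C[of "Suc m"] by simp
    then show "qq (Suc m) \<noteq> snd (st m)" by (auto split: if_splits)
  qed
  have bval: "m \<ge> n \<Longrightarrow> snd (st m) = b0 + (m - n)" for m
  proof (induction m rule: dec_induct)
    case base then show ?case by (simp add: b0_def)
  next
    case (step m)
    then show ?case using bs[OF step(1)] by (simp add: Suc_diff_le)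
  qed
  have qv: "\<And>m. m \<ge> n \<Longrightarrow> snd (st m) \<in> qq ` {..m} \<and> qq (Suc m) = a0 + 2 * snd (st m) + 2"
  proof -
    fix m assume m: "m \<ge> n"
    have "fst (st m) = a0" using C[OF m] a0_def by simp
    then show "snd (st m) \<in> qq ` {..m} \<and> qq (Suc m) = a0 + 2 * snd (st m) + 2"
      using step[OF Inv_st[of m]] bs[OF m] by auto
  qed
  define m where "m = n + a0 + 2*b0 + 1 + b0 mod 2"
  have mn: "m \<ge> n" unfolding m_def by simp
  have bm: "snd (st m) = b0 + a0 + 2*b0 + 1 + b0 mod 2" using bval[OF mn] unfolding m_def by simp
  have odd: "odd (snd (st m) + a0)" unfolding bm by presburger
  obtain k where k: "k \<le> m" "qq k = snd (st m)" using qv[OF mn] by auto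
  show False
  proof (cases "k \<le> n")
    case True
    have "qq k \<le> a0 + 2*b0" using Inv_bound[OF Inv_st[of n] True] a0_def b0_def by simp
    then show False using k bm by simp
  next
    case False
    then obtain k' where k': "k = Suc k'" "k' \<ge> n" by (cases k) auto
    have "qq k = a0 + 2 * snd (st k') + 2" using qv[OF k'(2)] k' by simp
    then show False using odd k by presburger
  qed
qed

lemma a_unb: "\<exists>m. k \<le> fst (st m)"
proof (induction k)
  case 0 then show ?case by simp
next
  case (Suc k)
  then obtain m where "k \<le> fst (st m)" by auto
  moreover obtain m' where "fst (st m) < fst (st m')" using a_grows by blast
  ultimately show ?case by (intro exI[of _ m']) simp
qed

lemma qq_notin: "k < j \<Longrightarrow> qq j \<noteq> qq k \<and> qq j \<noteq> qq k + j - k"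
proof -
  assume "k < j"
  have "qq j \<notin> qq ` {..<j} \<union> (\<lambda>k. qq k + j - k) ` {..<j}"
    by (subst qrec) (rule mex_notin, simp)
  then show ?thesis using \<open>k < j\<close> by auto
qed

theorem theorem5p1:
  shows "bij (\<lambda>j. qarr 2 j) \<and> (\<forall>z::int. \<exists>!j::nat. int (qarr 2 j) - int j = z)"
proof -
  have f: "(\<lambda>j. qarr 2 j) = qq" by (simp add: fun_eq_iff qq_def)
  have inj: "inj qq"
  proof (rule injI)
    fix x y assume "qq x = qq y"
    then show "x = y" using qq_notin[of x y] qq_notin[of y x] by (cases x y rule: linorder_cases) auto
  qed
  have surj: "surj qq"
  proof -
    have "v \<in> range qq" for v
    proof -
      have "v \<in> {..<snd (st (2 * Suc v))}" using b_unb[of "Suc v"] by auto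
      then show ?thesis using Inv_st[of "2 * Suc v"] unfolding Inv_def by blast
    qed
    then show ?thesis by blast
  qed
  have ex: "\<exists>j. int (qq j) - int j = z" for z
  proof -
    obtain n where n: "z \<in> {- int (fst (st n))..int (snd (st n))}"
    proof (cases "z \<ge> 0")
      case True
      have "nat z \<le> snd (st (2 * nat z))" by (rule b_unb)
      then have "z \<le> int (snd (st (2 * nat z)))" using True by linarith
      then show ?thesis using True by (intro that[of "2 * nat z"]) simp
    next
      case False
      obtain m where "nat (-z) \<le> fst (st m)" using a_unb by blast
      then have "- int (fst (st m)) \<le> z" using False by linarith
      moreover have "z \<le> int (snd (st m))" using False by linarith
      ultimately show ?thesis by (intro that[of m]) simp
    qed
    then have "z \<in> (\<lambda>k. int (qq k) - int k) ` {..n}" using Inv_st[of n] unfolding Inv_def by simp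
    then show ?thesis by blast
  qed
  have un: "int (qq i) - int i = int (qq j) - int j \<Longrightarrow> i = j" for i j
  proof (rule ccontr)
    assume e: "int (qq i) - int i = int (qq j) - int j" and "i \<noteq> j"
    then consider "i < j" | "j < i" by linarith
    then show False
    proof cases
      case 1
      then have "qq j = qq i + j - i" using e by linarith
      then show False using qq_notin[OF 1] by simp
    next
      case 2
      then have "qq i = qq j + i - j" using e by linarith
      then show False using qq_notin[OF 2] by simp
    qed
  qed
  show ?thesis unfolding f bij_def using inj surj ex un by blast
qed

end
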